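(* Let $\mathcal{R}$ be a (finite or infinite) set of positive integers and let $R(z)=\sum_{r\in\mathcal{R}} z^r$. Let $K_{\mathcal{R}}(t,x,z)=\sum_S t^{\mathrm{da}(S)}x^{m(S)}z^{|S|}$, where the sum runs over all compositions $S$ (including the empty one) all of whose parts belong to $\mathcal{R}$, $m(S)$ is the number of parts and $|S|$ the sum of the parts. Then, as formal power series, $$K_{\mathcal{R}}(t,x,z)=\frac{1+xR(z)}{1-x^2R(z^2)-tx^2\left(R(z)^2-R(z^2)\right)}.$$
   Context: A composition is a finite sequence $(a_1,\dots,a_m)$, $m\ge0$, of positive integers. For a finite sequence $S=(a_1,\dots,a_m)$, the degree of asymmetry is $\mathrm{da}(S)=|\{i: 1\le i\le m/2,\ a_i\neq a_{m+1-i}\}|$. *)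

theory Defs
  imports "HOL-Computational_Algebra.Formal_Power_Series"
begin

text \<open>Lists are 0-indexed,
  so index i (0-based, i < m div 2) corresponds to position i+1, and its mirror
  m+1-(i+1) corresponds to 0-based index m-1-i.\<close>
definition da :: "nat list \<Rightarrow> nat" where
  "da S = card {i. i < length S div 2 \<and> S ! i \<noteq> S ! (length S - 1 - i)}"

definition comps :: "nat set \<Rightarrow> nat \<Rightarrow> nat list set" where
  "comps R n = {S. (\<forall>a\<in>set S. 0 < a) \<and> set S \<subseteq> R \<and> sum_list S = n}"

text \<open>Trivariate formal power series in t, x, z are represented as nested power
  series: outer variable z, middle variable x, inner variable t.\<close>
type_synonym fps3 = "rat fps fps fps"

definition var_t :: fps3 where "var_t = fps_const (fps_const fps_X)"
definition var_x :: fps3 where "var_x = fps_const fps_X"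
definition var_z :: fps3 where "var_z = fps_X"

definition Rser :: "nat set \<Rightarrow> fps3" where
  "Rser R = Abs_fps (\<lambda>n. if n \<in> R then 1 else 0)"

definition Kser :: "nat set \<Rightarrow> fps3" where
  "Kser R = Abs_fps (\<lambda>n. Abs_fps (\<lambda>m. Abs_fps (\<lambda>d.
      of_nat (card {S \<in> comps R n. length S = m \<and> da S = d}))))"

end

theory Submission
  imports Defs
begin
unbundle fps_syntax

lemma da_snoc_cons: "da (a # S @ [b]) = da S + (if a = b then 0 else 1)"
proof -
  define A where "A = {i. i < length S div 2 \<and> S ! i \<noteq> S ! (length S - 1 - i)}"
  have eq: "{i. i < length (a # S @ [b]) div 2 \<and> (a # S @ [b]) ! i \<noteq> (a # S @ [b]) ! (length (a # S @ [b]) - 1 - i)}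
      = (if a = b then {} else {0}) \<union> Suc ` A"
  proof (rule set_eqI)
    fix i
    show "i \<in> {i. i < length (a # S @ [b]) div 2 \<and> (a # S @ [b]) ! i \<noteq> (a # S @ [b]) ! (length (a # S @ [b]) - 1 - i)}
      \<longleftrightarrow> i \<in> (if a = b then {} else {0}) \<union> Suc ` A"
    proof (cases i)
      case 0
      then show ?thesis by (auto simp: nth_append)
    next
      case (Suc j)
      have "j < length S div 2 \<Longrightarrow> (a # S @ [b]) ! Suc j = S ! j" by (auto simp: nth_append)
      moreover have "j < length S div 2 \<Longrightarrow> (a # S @ [b]) ! (length (a # S @ [b]) - 1 - Suc j) = S ! (length S - 1 - j)"
      proof -
        assume j: "j < length S div 2"
        have "length (a # S @ [b]) - 1 - Suc j = Suc (length S - 1 - j)" using j by auto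
        then show ?thesis using j by (auto simp: nth_append)
      qed
      ultimately show ?thesis using Suc by (auto simp: A_def)
    qed
  qed
  have fA: "finite A" unfolding A_def by auto
  show ?thesis unfolding da_def eq
    using fA by (auto simp: card_image) (simp add: A_def)
qed

lemma len_le_sum: "\<forall>a\<in>set S. 0 < (a::nat) \<Longrightarrow> length S \<le> sum_list S"
  by (induction S) auto

lemma finite_comps: "finite (comps R n)"
proof -
  have "comps R n \<subseteq> {S. set S \<subseteq> {..n} \<and> length S \<le> n}"
    using len_le_sum member_le_sum_list by (fastforce simp: comps_def)
  then show ?thesis using finite_lists_length_le[of "{..n}" n] finite_subset by blast
qed


definition Pairs :: "nat set \<Rightarrow> nat \<Rightarrow> (nat \<times> nat) set" where
  "Pairs R n = {p. fst p \<in> R \<and> snd p \<in> R \<and> fst p + snd p \<le> n}"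

definition ext2 :: "nat \<times> nat \<Rightarrow> nat list \<Rightarrow> nat list" where
  "ext2 p S = fst p # S @ [snd p]"

lemma finite_Pairs: "finite (Pairs R n)"
proof -
  have "Pairs R n \<subseteq> {..n} \<times> {..n}" by (auto simp: Pairs_def)
  then show ?thesis using finite_subset by blast
qed

lemma comps_split:
  assumes pos: "\<forall>r\<in>R. 0 < r"
  shows "comps R n = ((if n = 0 then {[]} else {}) \<union> (if n \<in> R then {[n]} else {}))
     \<union> (\<Union>p\<in>Pairs R n. ext2 p ` comps R (n - (fst p + snd p)))"
proof (rule set_eqI)
  fix S
  show "S \<in> comps R n \<longleftrightarrow> S \<in> ((if n = 0 then {[]} else {}) \<union> (if n \<in> R then {[n]} else {}))
     \<union> (\<Union>p\<in>Pairs R n. ext2 p ` comps R (n - (fst p + snd p)))"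
  proof
    assume S: "S \<in> comps R n"
    show "S \<in> ((if n = 0 then {[]} else {}) \<union> (if n \<in> R then {[n]} else {}))
     \<union> (\<Union>p\<in>Pairs R n. ext2 p ` comps R (n - (fst p + snd p)))"
    proof (cases S)
      case Nil
      then show ?thesis using S by (auto simp: comps_def)
    next
      case (Cons x T)
      show ?thesis
      proof (cases T rule: rev_cases)
        case Nil
        then show ?thesis using S Cons by (auto simp: comps_def)
      next
        case (snoc U y)
        have "(x, y) \<in> Pairs R n" using S Cons snoc by (auto simp: comps_def Pairs_def)
        moreover have "U \<in> comps R (n - (x + y))" using S Cons snoc by (auto simp: comps_def)
        moreover have "S = ext2 (x, y) U" using Cons snoc by (simp add: ext2_def)
        ultimately show ?thesis by force
      qed
    qed
  next
    assume "S \<in> ((if n = 0 then {[]} else {}) \<union> (if n \<in> R then {[n]} else {}))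
     \<union> (\<Union>p\<in>Pairs R n. ext2 p ` comps R (n - (fst p + snd p)))"
    then consider "n = 0 \<and> S = []" | "n \<in> R \<and> S = [n]"
      | "\<exists>p\<in>Pairs R n. \<exists>U\<in>comps R (n - (fst p + snd p)). S = ext2 p U"
      by (auto split: if_splits)
    then show "S \<in> comps R n"
    proof cases
      case 1 then show ?thesis by (simp add: comps_def)
    next
      case 2 then show ?thesis using pos by (simp add: comps_def)
    next
      case 3
      then obtain p U where p: "p \<in> Pairs R n" and U: "U \<in> comps R (n - (fst p + snd p))"
        and SU: "S = ext2 p U" by blast
      show ?thesis using p U pos unfolding SU by (auto simp: comps_def Pairs_def ext2_def)
    qed
  qed
qed

definition mono :: "nat list \<Rightarrow> rat fps fps" where
  "mono S = fps_X ^ length S * fps_const (fps_X ^ da S)"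

definition fR :: "nat set \<Rightarrow> nat \<Rightarrow> rat fps fps" where
  "fR R n = (\<Sum>S\<in>comps R n. mono S)"

lemma mono_ext2: "mono (ext2 p S) = fps_X^2 * (if fst p = snd p then 1 else fps_const fps_X) * mono S"
proof -
  have c: "fps_const (fps_X ^ (da S + 1)) = fps_const fps_X * fps_const (fps_X ^ da S :: rat fps)"
    by (simp add: mult.commute)
  have l: "fps_X ^ length (ext2 p S) = fps_X^2 * (fps_X ^ length S :: rat fps fps)"
    by (simp add: ext2_def power_add mult.commute power2_eq_square)
  show ?thesis
  proof (cases "fst p = snd p")
    case True
    have "da (ext2 p S) = da S" using True by (simp add: ext2_def da_snoc_cons)
    then show ?thesis unfolding mono_def l using True by (simp add: mult_ac)
  next
    case False
    have "da (ext2 p S) = da S + 1" using False by (simp add: ext2_def da_snoc_cons)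
    then show ?thesis unfolding mono_def l using False by (simp only: c) (simp add: mult_ac)
  qed
qed

lemma ext2_inj: "inj (ext2 p)"
  by (auto simp: inj_def ext2_def)

lemma ext2_eq_imp: "ext2 p S = ext2 q T \<Longrightarrow> p = q"
proof -
  assume h: "ext2 p S = ext2 q T"
  have "hd (ext2 p S) = hd (ext2 q T)" "last (ext2 p S) = last (ext2 q T)" using h by simp_all
  then show "p = q" by (simp add: ext2_def prod_eq_iff)
qed

lemma da_Nil[simp]: "da [] = 0" and da_single[simp]: "da [x] = 0"
  by (simp_all add: da_def)

lemma recB:
  assumes pos: "\<forall>r\<in>R. 0 < r"
  shows "fR R n = (if n = 0 then 1 else 0) + (if n \<in> R then fps_X else 0)
     + fps_X^2 * (\<Sum>a\<in>{a\<in>R. 2*a \<le> n}. fR R (n - 2*a))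
     + fps_const fps_X * fps_X^2 * ((\<Sum>p\<in>Pairs R n. fR R (n - (fst p + snd p)))
          - (\<Sum>a\<in>{a\<in>R. 2*a \<le> n}. fR R (n - 2*a)))"
proof -
  let ?E = "(if n = 0 then {[]} else {}) \<union> (if n \<in> R then {[n]} else {})"
  let ?T = "(\<Union>p\<in>Pairs R n. ext2 p ` comps R (n - (fst p + snd p)))"
  have fE: "finite ?E" by auto
  have fT: "finite ?T" using finite_Pairs finite_comps by auto
  have dis: "?E \<inter> ?T = {}" by (auto simp: ext2_def)
  have sE: "sum mono ?E = (if n = 0 then 1 else 0) + (if n \<in> R then fps_X else 0)"
    using pos by (cases "n = 0") (auto simp: mono_def)
  have sT: "sum mono ?T = (\<Sum>p\<in>Pairs R n. sum mono (ext2 p ` comps R (n - (fst p + snd p))))"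
    by (rule sum.UNION_disjoint) (use finite_Pairs finite_comps ext2_eq_imp in blast)+
  have sT2: "\<And>p. sum mono (ext2 p ` comps R (n - (fst p + snd p)))
     = fps_X^2 * (if fst p = snd p then 1 else fps_const fps_X) * fR R (n - (fst p + snd p))"
    by (simp add: sum.reindex[OF inj_on_subset[OF ext2_inj subset_UNIV]] mono_ext2 fR_def sum_distrib_left mult_ac)
  define PD where "PD = {p\<in>Pairs R n. fst p = snd p}"
  define PO where "PO = {p\<in>Pairs R n. fst p \<noteq> snd p}"
  have PDeq: "PD = (\<lambda>a. (a, a)) ` {a\<in>R. 2*a \<le> n}" by (auto simp: PD_def Pairs_def)
  have fPD: "finite PD" "finite PO" using finite_Pairs by (auto simp: PD_def PO_def)
  have PU: "Pairs R n = PD \<union> PO" "PD \<inter> PO = {}" by (auto simp: PD_def PO_def)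
  have dg: "(\<Sum>p\<in>PD. fR R (n - (fst p + snd p))) = (\<Sum>a\<in>{a\<in>R. 2*a \<le> n}. fR R (n - 2*a))"
    unfolding PDeq by (subst sum.reindex) (auto simp: inj_on_def mult_2)
  have full: "(\<Sum>p\<in>Pairs R n. fR R (n - (fst p + snd p)))
      = (\<Sum>p\<in>PD. fR R (n - (fst p + snd p))) + (\<Sum>p\<in>PO. fR R (n - (fst p + snd p)))"
    unfolding PU(1) by (rule sum.union_disjoint) (use fPD PU in auto)
  have T3: "(\<Sum>p\<in>Pairs R n. fps_X^2 * (if fst p = snd p then 1 else fps_const fps_X) * fR R (n - (fst p + snd p)))
     = (\<Sum>p\<in>PD. fps_X^2 * (if fst p = snd p then 1 else fps_const fps_X) * fR R (n - (fst p + snd p)))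
     + (\<Sum>p\<in>PO. fps_X^2 * (if fst p = snd p then 1 else fps_const fps_X) * fR R (n - (fst p + snd p)))"
    unfolding PU(1) by (rule sum.union_disjoint) (use fPD PU in auto)
  have T4: "(\<Sum>p\<in>PD. fps_X^2 * (if fst p = snd p then 1 else fps_const fps_X) * fR R (n - (fst p + snd p)))
      = fps_X^2 * (\<Sum>p\<in>PD. fR R (n - (fst p + snd p)))"
    by (simp add: sum_distrib_left PD_def)
  have T5: "(\<Sum>p\<in>PO. fps_X^2 * (if fst p = snd p then 1 else fps_const fps_X) * fR R (n - (fst p + snd p)))
      = fps_const fps_X * fps_X^2 * (\<Sum>p\<in>PO. fR R (n - (fst p + snd p)))"
    by (simp add: sum_distrib_left PO_def mult_ac)
  have "fR R n = sum mono ?E + sum mono ?T"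
    unfolding fR_def by (subst comps_split[OF pos]) (rule sum.union_disjoint[OF fE fT dis])
  also have "\<dots> = (if n = 0 then 1 else 0) + (if n \<in> R then fps_X else 0)
     + fps_X^2 * (\<Sum>p\<in>PD. fR R (n - (fst p + snd p)))
     + fps_const fps_X * fps_X^2 * (\<Sum>p\<in>PO. fR R (n - (fst p + snd p)))"
    unfolding sE sT sT2 T3 T4 T5 by (simp add: add_ac)
  finally show ?thesis unfolding full dg by simp
qed


lemma mono_nth: "mono S $ m $ d = (if length S = m \<and> da S = d then 1 else 0)"
  by (auto simp: mono_def fps_X_power_mult_nth)

lemma K_nth: "Kser R $ n = fR R n"
proof (rule fps_ext, rule fps_ext)
  fix m d
  have "fR R n $ m $ d = (\<Sum>S\<in>comps R n. (if length S = m \<and> da S = d then 1 else 0))"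
    by (simp add: fR_def fps_sum_nth mono_nth)
  also have "\<dots> = of_nat (card {S \<in> comps R n. length S = m \<and> da S = d})"
    by (simp add: sum.inter_filter[symmetric] finite_comps)
  finally show "Kser R $ n $ m $ d = fR R n $ m $ d" by (simp add: Kser_def)
qed

lemma Rser_nth: "Rser R $ i = (if i \<in> R then 1 else 0)"
  by (simp add: Rser_def)

lemma compose_nth: "(Rser R oo var_z^2) $ i = (if even i \<and> i div 2 \<in> R then 1 else 0)"
proof -
  have "(Rser R oo var_z^2) $ i = (\<Sum>j=0..i. Rser R $ j * (if i = 2 * j then 1 else 0))"
    by (simp add: fps_compose_nth var_z_def power_mult[symmetric])
  also have "\<dots> = (\<Sum>j=0..i. if j = i div 2 then (if even i then Rser R $ j else 0) else 0)"
    by (rule sum.cong) auto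
  also have "\<dots> = (if even i then Rser R $ (i div 2) else 0)"
    by (simp add: sum.delta')
  finally show ?thesis by (simp add: Rser_nth)
qed

lemma PK: "((Rser R oo var_z^2) * G) $ n = (\<Sum>a\<in>{a\<in>R. 2*a \<le> n}. G $ (n - 2*a))"
proof -
  have "((Rser R oo var_z^2) * G) $ n = (\<Sum>i=0..n. if even i \<and> i div 2 \<in> R then G $ (n - i) else 0)"
    by (auto simp: fps_mult_nth compose_nth intro!: sum.cong)
  also have "\<dots> = (\<Sum>i\<in>{i\<in>{0..n}. even i \<and> i div 2 \<in> R}. G $ (n - i))"
    by (rule sum.inter_filter[symmetric]) simp
  also have "{i\<in>{0..n}. even i \<and> i div 2 \<in> R} = (\<lambda>a. 2*a) ` {a\<in>R. 2*a \<le> n}"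
    by (auto elim!: evenE)
  also have "(\<Sum>i\<in>(\<lambda>a. 2*a) ` {a\<in>R. 2*a \<le> n}. G $ (n - i)) = (\<Sum>a\<in>{a\<in>R. 2*a \<le> n}. G $ (n - 2*a))"
    by (subst sum.reindex) (auto simp: inj_on_def)
  finally show ?thesis .
qed

lemma QK: "(Rser R ^ 2 * G) $ n = (\<Sum>p\<in>Pairs R n. G $ (n - (fst p + snd p)))"
proof -
  define g where "g i j = (if i \<in> R \<and> j \<in> R then G $ (n - (i + j)) else 0)" for i j
  have "(Rser R ^ 2 * G) $ n = (\<Sum>k\<le>n. \<Sum>i\<le>k. g i (k - i))"
    by (auto simp: fps_mult_nth power2_eq_square sum_distrib_right Rser_nth g_def atLeast0AtMost
        intro!: sum.cong)
  also have "\<dots> = (\<Sum>(i,j)\<in>{(i,j). i+j \<le> n}. g i j)"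
    by (rule sum.triangle_reindex_eq[symmetric])
  also have "\<dots> = (\<Sum>p\<in>{(i,j). i+j \<le> n}. if fst p \<in> R \<and> snd p \<in> R then G $ (n - (fst p + snd p)) else 0)"
    by (simp add: g_def split_beta)
  also have "\<dots> = (\<Sum>p\<in>{p\<in>{(i,j). i+j \<le> n}. fst p \<in> R \<and> snd p \<in> R}. G $ (n - (fst p + snd p)))"
  proof -
    have "finite {(i,j). i+j \<le> (n::nat)}"
      by (rule finite_subset[of _ "{..n} \<times> {..n}"]) auto
    then show ?thesis by (rule sum.inter_filter[symmetric])
  qed
  also have "{p\<in>{(i,j). i+j \<le> n}. fst p \<in> R \<and> snd p \<in> R} = Pairs R n"
    by (auto simp: Pairs_def)
  finally show ?thesis .
qed


theorem proposition2p2: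
  fixes R :: "nat set"
  assumes "\<forall>r\<in>R. 0 < r"
  shows "Kser R =
    (1 + var_x * Rser R) *
    inverse (1 - var_x ^ 2 * (Rser R oo var_z ^ 2)
               - var_t * var_x ^ 2 * (Rser R ^ 2 - (Rser R oo var_z ^ 2)))"
proof -
  define K where "K = Kser R"
  define P where "P = Rser R oo var_z ^ 2"
  define Q where "Q = Rser R ^ 2"
  define N where "N = 1 + var_x * Rser R"
  define D where "D = 1 - var_x ^ 2 * P - var_t * var_x ^ 2 * (Q - P)"
  have x2: "var_x ^ 2 = fps_const (fps_X ^ 2)" by (simp add: var_x_def fps_const_power)
  have tx2: "var_t * var_x ^ 2 = fps_const (fps_const fps_X * fps_X ^ 2)"
    by (simp add: x2 var_t_def)
  have rec: "K = N + var_x ^ 2 * (P * K) + var_t * var_x ^ 2 * (Q * K - P * K)"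
  proof (rule fps_ext)
    fix n
    have "K $ n = fR R n" by (simp add: K_def K_nth)
    also have "\<dots> = (if n = 0 then 1 else 0) + (if n \<in> R then fps_X else 0)
     + fps_X^2 * (\<Sum>a\<in>{a\<in>R. 2*a \<le> n}. fR R (n - 2*a))
     + fps_const fps_X * fps_X^2 * ((\<Sum>p\<in>Pairs R n. fR R (n - (fst p + snd p)))
          - (\<Sum>a\<in>{a\<in>R. 2*a \<le> n}. fR R (n - 2*a)))"
      by (rule recB[OF assms])
    also have "\<dots> = (N + var_x ^ 2 * (P * K) + var_t * var_x ^ 2 * (Q * K - P * K)) $ n"
      unfolding tx2 unfolding x2
      by (simp add: N_def P_def Q_def PK QK K_def K_nth Rser_nth var_x_def)
    finally show "K $ n = (N + var_x ^ 2 * (P * K) + var_t * var_x ^ 2 * (Q * K - P * K)) $ n" .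
  qed
  have KD: "K * D = N"
  proof -
    have "K * D = K - (var_x ^ 2 * (P * K) + var_t * var_x ^ 2 * (Q * K - P * K))"
      by (simp add: D_def algebra_simps)
    also have "\<dots> = N" by (subst (1) rec) simp
    finally show ?thesis .
  qed
  have R0: "Rser R $ 0 = 0" using assms by (auto simp: Rser_nth)
  have D0: "D $ 0 = 1"
    by (simp add: D_def P_def Q_def R0 var_x_def var_t_def)
  have inv1: "inverse (1 :: rat fps fps) = 1"
    by (rule fps_inverse_one'[OF fps_inverse_one])
  have "inverse D = Abs_fps (fps_right_inverse_constructor D (inverse (D $ 0)))"
    by (rule fps_inverse_def)
  also have "\<dots> = fps_right_inverse D 1" by (simp only: D0 inv1)
  finally have ID: "inverse D = fps_right_inverse D 1" .
  have DI: "D * inverse D = 1"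
    unfolding ID by (rule fps_right_inverse) (simp add: D0)
  have "K = K * (D * inverse D)" by (simp add: DI)
  also have "\<dots> = N * inverse D" by (simp add: KD mult.assoc[symmetric])
  finally show ?thesis by (simp add: K_def N_def D_def P_def Q_def)
qed

end
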